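(* Let $(\Omega,\mathcal A)$ be a measurable space, let $A$ be a uniform algebra on a compact metric space $K$ with maximal ideal space $M$, and let $f:\Omega\times K\to\mathbb C$ satisfy $f(\omega,\cdot)\in A$ for all $\omega$ and $f(\cdot,z)$ measurable for all $z\in K$. Then the Gelfand transform $\widehat f:\Omega\times M\to\mathbb C$, $\widehat f(\omega,\phi)=\phi(f(\omega,\cdot))$, is a random continuous function on $M$, i.e. $\widehat f(\cdot,\phi)$ is measurable for each $\phi\in M$ and $\widehat f(\omega,\cdot)$ is continuous on $M$ for each $\omega$.
   Context: A uniform algebra on $K$ is a closed subalgebra of $C(K)$ with the sup norm containing the constants and separating points; $M$ is the set of nonzero multiplicative linear functionals on $A$ with the Gelfand (weak-* ) topology. *)

theory Defs
  imports "HOL-Analysis.Analysis" "HOL-Probability.Probability"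
begin

text \<open>The compact metric space K is taken to be the (whole) carrier of a metric type 'k
  with compact UNIV.  C(K) is then the set of continuous functions 'k => complex,
  with the sup norm (closedness = closed under uniform limits).\<close>

definition uniform_algebra :: "('k::metric_space \<Rightarrow> complex) set \<Rightarrow> bool" where
  "uniform_algebra A \<longleftrightarrow>
     A \<subseteq> {g. continuous_on UNIV g}
   \<and> (\<forall>f\<in>A. \<forall>g\<in>A. (\<lambda>x. f x + g x) \<in> A)
   \<and> (\<forall>f\<in>A. \<forall>c. (\<lambda>x. c * f x) \<in> A)
   \<and> (\<forall>f\<in>A. \<forall>g\<in>A. (\<lambda>x. f x * g x) \<in> A)
   \<and> (\<forall>c. (\<lambda>_. c) \<in> A)
   \<and> (\<forall>x y. x \<noteq> y \<longrightarrow> (\<exists>g\<in>A. g x \<noteq> g y))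
   \<and> (\<forall>s g. (\<forall>n. s n \<in> A) \<and> uniform_limit UNIV s g sequentially \<longrightarrow> g \<in> A)"

text \<open>Maximal ideal space: nonzero multiplicative linear functionals on A
  (functionals are taken extensional, i.e. determined by their values on A).\<close>

definition mult_lin_functionals :: "('k \<Rightarrow> complex) set \<Rightarrow> (('k \<Rightarrow> complex) \<Rightarrow> complex) set" where
  "mult_lin_functionals A = {\<phi>. \<phi> \<in> extensional A
     \<and> (\<forall>f\<in>A. \<forall>g\<in>A. \<phi> (\<lambda>x. f x + g x) = \<phi> f + \<phi> g)
     \<and> (\<forall>f\<in>A. \<forall>c. \<phi> (\<lambda>x. c * f x) = c * \<phi> f)
     \<and> (\<forall>f\<in>A. \<forall>g\<in>A. \<phi> (\<lambda>x. f x * g x) = \<phi> f * \<phi> g)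
     \<and> (\<exists>f\<in>A. \<phi> f \<noteq> 0)}"

definition gelfand_topology :: "('k \<Rightarrow> complex) set \<Rightarrow> (('k \<Rightarrow> complex) \<Rightarrow> complex) topology" where
  "gelfand_topology A = topology_generated_by
     ({{\<phi> \<in> mult_lin_functionals A. \<phi> a \<in> U} | a U. a \<in> A \<and> open U}
      \<union> {mult_lin_functionals A})"

end

theory Submission
  imports Defs
begin

lemma mlf_props:
  assumes "\<phi> \<in> mult_lin_functionals A"
  shows "\<And>f g. f\<in>A \<Longrightarrow> g\<in>A \<Longrightarrow> \<phi> (\<lambda>x. f x + g x) = \<phi> f + \<phi> g"
  and "\<And>f c. f\<in>A \<Longrightarrow> \<phi> (\<lambda>x. c * f x) = c * \<phi> f"
  and "\<And>f g. f\<in>A \<Longrightarrow> g\<in>A \<Longrightarrow> \<phi> (\<lambda>x. f x * g x) = \<phi> f * \<phi> g"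
  and "\<exists>f\<in>A. \<phi> f \<noteq> 0"
  using assms unfolding mult_lin_functionals_def by auto

lemma ua_props:
  assumes "uniform_algebra A"
  shows "\<And>g. g \<in> A \<Longrightarrow> continuous_on UNIV g"
  and "\<And>f g. f\<in>A \<Longrightarrow> g\<in>A \<Longrightarrow> (\<lambda>x. f x + g x) \<in> A"
  and "\<And>f c. f\<in>A \<Longrightarrow> (\<lambda>x. c * f x) \<in> A"
  and "\<And>f g. f\<in>A \<Longrightarrow> g\<in>A \<Longrightarrow> (\<lambda>x. f x * g x) \<in> A"
  and "\<And>c. (\<lambda>_. c) \<in> A"
  and "\<And>s g. (\<And>n. s n \<in> A) \<Longrightarrow> uniform_limit UNIV s g sequentially \<Longrightarrow> g \<in> A"
proof -
  have H: "\<forall>s g. (\<forall>n. s n \<in> A) \<and> uniform_limit UNIV s g sequentially \<longrightarrow> g \<in> A"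
    using assms unfolding uniform_algebra_def by (elim conjE)
  show "\<And>s g. (\<And>n. s n \<in> A) \<Longrightarrow> uniform_limit UNIV s g sequentially \<Longrightarrow> g \<in> A"
    using H by blast
qed (use assms in \<open>auto simp: uniform_algebra_def\<close>)

lemma mlf_const:
  assumes ua: "uniform_algebra A" and phi: "\<phi> \<in> mult_lin_functionals A"
  shows "\<phi> (\<lambda>x. c) = c"
proof -
  obtain f0 where f0: "f0 \<in> A" "\<phi> f0 \<noteq> 0" using mlf_props(4)[OF phi] by blast
  have c1: "(\<lambda>x. 1::complex) \<in> A" using ua_props(5)[OF ua] by blast
  have e1: "\<phi> (\<lambda>x. (1::complex) * f0 x) = \<phi> (\<lambda>x. 1) * \<phi> f0"
    by (rule mlf_props(3)[OF phi c1 f0(1)])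
  have "(\<lambda>x. (1::complex) * f0 x) = f0" by simp
  with e1 have e2: "\<phi> f0 = \<phi> (\<lambda>x. 1) * \<phi> f0" by metis
  hence "\<phi> (\<lambda>x. 1) = 1" using f0(2) by (metis mult_cancel_right2)
  moreover have "\<phi> (\<lambda>x. c * 1) = c * \<phi> (\<lambda>x. 1)" by (rule mlf_props(2)[OF phi c1])
  ultimately show ?thesis by simp
qed

lemma mlf_bound:
  assumes ua: "uniform_algebra A" and phi: "\<phi> \<in> mult_lin_functionals A"
    and g: "g \<in> A" and B: "\<And>x. cmod (g x) \<le> B"
  shows "cmod (\<phi> g) \<le> B"
proof (rule ccontr)
  assume "\<not> ?thesis"
  hence lt: "B < cmod (\<phi> g)" by simp
  define l where "l = \<phi> g"
  have B0: "0 \<le> B" using norm_ge_zero[of "g undefined"] B[of undefined] by linarith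
  have l0: "l \<noteq> 0" using lt B0 l_def by auto
  define h where "h = (\<lambda>x. (1/l) * g x)"
  have hA: "h \<in> A" unfolding h_def using ua_props(3)[OF ua g] .
  have "\<phi> h = (1/l) * \<phi> g" unfolding h_def by (rule mlf_props(2)[OF phi g])
  hence ph: "\<phi> h = 1" using l0 l_def by simp
  define r where "r = B / cmod l"
  have lpos: "0 < cmod l" using l0 by simp
  have r1: "r < 1" "0 \<le> r" unfolding r_def using lt B0 lpos l_def by (simp_all add: divide_less_eq)
  have hr: "cmod (h x) \<le> r" for x
    using B[of x] l0 unfolding h_def r_def by (simp add: norm_mult norm_divide divide_right_mono)
  have powA: "(\<lambda>x. h x ^ i) \<in> A" for i
  proof (induction i)
    case 0 then show ?case using ua_props(5)[OF ua] by simp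
  next
    case (Suc i) then show ?case using ua_props(4)[OF ua hA Suc] by simp
  qed
  define s where "s = (\<lambda>n x. \<Sum>i<n. h x ^ i)"
  have sA: "s n \<in> A" for n
  proof (induction n)
    case 0 then show ?case using ua_props(5)[OF ua] by (simp add: s_def)
  next
    case (Suc n) then show ?case using ua_props(2)[OF ua Suc powA[of n]] by (simp add: s_def)
  qed
  define v where "v = (\<lambda>x. \<Sum>i. h x ^ i)"
  have ul: "uniform_limit UNIV s v sequentially"
    unfolding s_def v_def
  proof (rule Weierstrass_m_test)
    show "\<And>n x. x \<in> UNIV \<Longrightarrow> norm (h x ^ n) \<le> r ^ n"
      using hr by (simp add: norm_power power_mono)
    show "summable (\<lambda>n. r ^ n)" using r1 by (simp add: summable_geometric)
  qed
  have vA: "v \<in> A" using ua_props(6)[OF ua, of s v] sA ul by blast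
  have c1: "(\<lambda>x. (1::complex)) \<in> A" using ua_props(5)[OF ua, of 1] .
  have m: "(\<lambda>x. (-1) * h x) \<in> A" by (rule ua_props(3)[OF ua hA])
  define u where "u = (\<lambda>x. 1 + (-1) * h x)"
  have uA: "u \<in> A" unfolding u_def using ua_props(2)[OF ua c1 m] .
  have "\<phi> u = \<phi> (\<lambda>x. 1) + \<phi> (\<lambda>x. (-1) * h x)" unfolding u_def using mlf_props(1)[OF phi c1 m] .
  hence pu: "\<phi> u = 0" using mlf_props(2)[OF phi hA, of "-1"] mlf_const[OF ua phi, of 1] ph by simp
  have uv: "(\<lambda>x. u x * v x) = (\<lambda>x. 1)"
  proof
    fix x
    have n1: "norm (h x) < 1" using hr[of x] r1 by simp
    have "v x = 1 / (1 - h x)" unfolding v_def using geometric_sums[OF n1] sums_unique by metis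
    moreover have "h x \<noteq> 1" using n1 by auto
    ultimately show "u x * v x = 1" unfolding u_def by simp
  qed
  have "\<phi> (\<lambda>x. u x * v x) = \<phi> u * \<phi> v" using mlf_props(3)[OF phi uA vA] .
  hence z: "\<phi> (\<lambda>x. (1::complex)) = 0" using uv pu by simp
  have "\<phi> (\<lambda>x. (1::complex)) = 1" by (rule mlf_const[OF ua phi])
  with z show False by simp
qed


lemma rat_approx_complex:
  assumes "0 < e"
  shows "\<exists>q::rat\<times>rat. cmod (c - Complex (of_rat (fst q)) (of_rat (snd q))) < e"
proof -
  obtain a where a: "a \<in> \<rat>" "Re c - e/2 < a" "a < Re c + e/2"
    using Rats_dense_in_real[of "Re c - e/2" "Re c + e/2"] assms by auto
  obtain b where b: "b \<in> \<rat>" "Im c - e/2 < b" "b < Im c + e/2"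
    using Rats_dense_in_real[of "Im c - e/2" "Im c + e/2"] assms by auto
  obtain a' where a': "a = of_rat a'" using a(1) Rats_cases by blast
  obtain b' where b': "b = of_rat b'" using b(1) Rats_cases by blast
  have "cmod (c - Complex a b) \<le> \<bar>Re (c - Complex a b)\<bar> + \<bar>Im (c - Complex a b)\<bar>"
    by (rule cmod_le)
  also have "\<dots> < e" using a b by simp
  finally show ?thesis using a' b' by (intro exI[of _ "(a', b')"]) simp
qed

lemma finite_net:
  assumes "compact (UNIV :: 'k::metric_space set)" and "0 < r"
  shows "\<exists>L::'k list. \<forall>x. \<exists>i<length L. dist x (L ! i) < r"
proof -
  have cov: "UNIV \<subseteq> \<Union>((\<lambda>y::'k. ball y r) ` UNIV)" using assms(2) by (auto intro!: exI[of _ 0])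
  obtain C :: "'k set" where C: "finite C" "UNIV \<subseteq> \<Union>((\<lambda>y. ball y r) ` C)"
    using compactE_image[OF assms(1), of UNIV "\<lambda>y. ball y r"] cov by (metis open_ball)
  obtain L where L: "set L = C" using finite_list[OF C(1)] by blast
  show ?thesis
  proof (intro exI[of _ L] allI)
    fix x :: 'k
    obtain y where y: "y \<in> C" "dist y x < r" using C(2) by (auto simp: subset_eq)
    then obtain i where "i < length L" "L ! i = y" using L by (auto simp: in_set_conv_nth)
    then show "\<exists>i<length L. dist x (L ! i) < r" using y by (auto simp: dist_commute)
  qed
qed

theorem proposition5p4:
  fixes \<Omega> :: "'w measure"
    and A :: "('k::metric_space \<Rightarrow> complex) set"
    and f :: "'w \<Rightarrow> 'k \<Rightarrow> complex"
  assumes "compact (UNIV :: 'k set)"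
    and "uniform_algebra A"
    and "\<And>\<omega>. f \<omega> \<in> A"
    and "\<And>z. (\<lambda>\<omega>. f \<omega> z) \<in> borel_measurable \<Omega>"
  shows "(\<forall>\<phi>\<in>mult_lin_functionals A. (\<lambda>\<omega>. \<phi> (f \<omega>)) \<in> borel_measurable \<Omega>)
       \<and> (\<forall>\<omega>. continuous_map (gelfand_topology A) euclidean (\<lambda>\<phi>. \<phi> (f \<omega>)))"
proof
  note cpt = assms(1) and ua = assms(2) and fA = assms(3)
  note fm[measurable] = assms(4)
  show "\<forall>\<omega>. continuous_map (gelfand_topology A) euclidean (\<lambda>\<phi>. \<phi> (f \<omega>))"
  proof
    fix \<omega>
    define S where "S = {{\<phi> \<in> mult_lin_functionals A. \<phi> a \<in> U} | a U. a \<in> A \<and> open U}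
      \<union> {mult_lin_functionals A}"
    have ts: "\<Union>S = mult_lin_functionals A" unfolding S_def by auto
    have gt: "gelfand_topology A = topology_generated_by S" by (simp add: gelfand_topology_def S_def)
    have tsp: "topspace (topology_generated_by S) = mult_lin_functionals A" using ts by simp
    show "continuous_map (gelfand_topology A) euclidean (\<lambda>\<phi>. \<phi> (f \<omega>))"
      unfolding continuous_map gt tsp
    proof (intro conjI allI impI)
      fix U :: "complex set" assume "openin euclidean U"
      hence "open U" by simp
      hence "{\<phi> \<in> mult_lin_functionals A. \<phi> (f \<omega>) \<in> U} \<in> S" unfolding S_def using fA by blast
      thus "openin (topology_generated_by S) {x \<in> mult_lin_functionals A. x (f \<omega>) \<in> U}"
        by (rule topology_generated_by_Basis)
    qed auto
  qed
  show "\<forall>\<phi>\<in>mult_lin_functionals A. (\<lambda>\<omega>. \<phi> (f \<omega>)) \<in> borel_measurable \<Omega>"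
  proof
    fix \<phi> assume phi: "\<phi> \<in> mult_lin_functionals A"
    have cont: "\<And>g. g \<in> A \<Longrightarrow> continuous_on UNIV g" using ua_props(1)[OF ua] .
    have "\<forall>n. \<exists>L::'k list. \<forall>x. \<exists>i<length L. dist x (L ! i) < inverse (real (Suc n))"
      using finite_net[OF cpt] by simp
    then obtain net :: "nat \<Rightarrow> 'k list"
      where net: "\<And>n x. \<exists>i<length (net n). dist x (net n ! i) < inverse (real (Suc n))"
      by metis
    define jn where "jn n x = (LEAST i. i < length (net n) \<and> dist x (net n ! i) < inverse (real (Suc n)))" for n x
    have jn: "jn n x < length (net n) \<and> dist x (net n ! jn n x) < inverse (real (Suc n))" for n x
      unfolding jn_def by (rule LeastI_ex) (use net in blast)
    define cq :: "rat \<times> rat \<Rightarrow> complex" where "cq q = Complex (of_rat (fst q)) (of_rat (snd q))" for q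
    define Fq where "Fq n qs x = cq (qs ! jn n x)" for n and qs :: "(rat\<times>rat) list" and x
    have Sdense: "\<exists>n qs. \<forall>x. cmod (g x - Fq n qs x) < \<epsilon>"
      if g: "continuous_on UNIV g" and e: "0 < \<epsilon>" for g \<epsilon>
    proof -
      have "uniformly_continuous_on UNIV g" using compact_uniformly_continuous[OF g cpt] .
      then obtain d where d: "d > 0" "\<And>x x'. dist x' x < d \<Longrightarrow> dist (g x') (g x) < \<epsilon>/2"
        unfolding uniformly_continuous_on_def using e by (metis half_gt_zero UNIV_I)
      obtain n where n: "inverse (real (Suc n)) < d" using reals_Archimedean[OF d(1)] by blast
      have "\<forall>c. \<exists>q. cmod (c - cq q) < \<epsilon>/2" unfolding cq_def using e by (intro allI rat_approx_complex) simp
      then obtain rq where rq: "\<And>c. cmod (c - cq (rq c)) < \<epsilon>/2" by metis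
      define qs where "qs = map (\<lambda>z. rq (g z)) (net n)"
      have "cmod (g x - Fq n qs x) < \<epsilon>" for x
      proof -
        define z where "z = net n ! jn n x"
        have "dist x z < d" using jn[of n x] n unfolding z_def by simp
        hence "dist (g x) (g z) < \<epsilon>/2" using d(2)[of x z] by simp
        hence 1: "cmod (g x - g z) < \<epsilon>/2" by (simp add: dist_norm)
        have "Fq n qs x = cq (rq (g z))" unfolding Fq_def qs_def z_def using jn[of n x] by simp
        moreover have 2: "cmod (g z - cq (rq (g z))) < \<epsilon>/2" by (rule rq)
        moreover have "g x - cq (rq (g z)) = (g x - g z) + (g z - cq (rq (g z)))" by simp
        ultimately show ?thesis using norm_triangle_lt[of "g x - g z" "g z - cq (rq (g z))" \<epsilon>] 1 by simp
      qed
      thus ?thesis by blast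
    qed
    define e0 :: "nat \<times> (rat\<times>rat) list \<times> nat \<Rightarrow> 'k \<Rightarrow> complex" where
      "e0 = (\<lambda>(n, qs, m). if \<exists>t\<in>A. \<forall>x. cmod (t x - Fq n qs x) < inverse (real (Suc m))
         then SOME t. t \<in> A \<and> (\<forall>x. cmod (t x - Fq n qs x) < inverse (real (Suc m))) else (\<lambda>x. 0))"
    define e where "e k = e0 (from_nat k)" for k
    have e0A: "e0 p \<in> A" for p
    proof -
      obtain n qs m where p: "p = (n, qs, m)" by (cases p) auto
      show ?thesis
      proof (cases "\<exists>t\<in>A. \<forall>x. cmod (t x - Fq n qs x) < inverse (real (Suc m))")
        case True
        hence "\<exists>t. t \<in> A \<and> (\<forall>x. cmod (t x - Fq n qs x) < inverse (real (Suc m)))" by blast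
        from someI_ex[OF this] True show ?thesis unfolding e0_def p by simp
      next
        case False
        thus ?thesis unfolding e0_def p using ua_props(5)[OF ua, of 0] by auto
      qed
    qed
    have eA: "e k \<in> A" for k unfolding e_def by (rule e0A)
    have Ddense: "\<exists>k. \<forall>x. cmod (g x - e k x) < \<epsilon>" if g: "g \<in> A" and ep: "0 < \<epsilon>" for g \<epsilon>
    proof -
      obtain m where m: "inverse (real (Suc m)) < \<epsilon>/2" using reals_Archimedean[of "\<epsilon>/2"] ep by auto
      have "0 < inverse (real (Suc m))" by simp
      then obtain n qs where nq: "\<forall>x. cmod (g x - Fq n qs x) < inverse (real (Suc m))"
        using Sdense[OF cont[OF g]] by blast
      have ex: "\<exists>t\<in>A. \<forall>x. cmod (t x - Fq n qs x) < inverse (real (Suc m))" using g nq by blast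
      hence ex': "\<exists>t. t \<in> A \<and> (\<forall>x. cmod (t x - Fq n qs x) < inverse (real (Suc m)))" by blast
      define t where "t = e (to_nat (n, qs, m))"
      have tt: "\<forall>x. cmod (t x - Fq n qs x) < inverse (real (Suc m))"
        unfolding t_def e_def e0_def using someI_ex[OF ex'] ex by simp
      have "cmod (g x - t x) < \<epsilon>" for x
      proof -
        have "g x - t x = (g x - Fq n qs x) - (t x - Fq n qs x)" by simp
        hence "cmod (g x - t x) \<le> cmod (g x - Fq n qs x) + cmod (t x - Fq n qs x)"
          by (metis norm_triangle_ineq4)
        thus ?thesis using nq tt m by (smt (verit) field_sum_of_halves)
      qed
      thus ?thesis unfolding t_def by blast
    qed
    define P where "P n k \<omega> = (\<forall>x. cmod (f \<omega> x - e k x) \<le> inverse (real (Suc n)))" for n k \<omega>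
    have Peq: "P n k \<omega> \<longleftrightarrow> (\<forall>m. \<forall>i<length (net m).
        cmod (f \<omega> (net m ! i) - e k (net m ! i)) \<le> inverse (real (Suc n)))" for n k \<omega>
    proof
      assume "P n k \<omega>" thus "\<forall>m. \<forall>i<length (net m).
        cmod (f \<omega> (net m ! i) - e k (net m ! i)) \<le> inverse (real (Suc n))" unfolding P_def by blast
    next
      assume H: "\<forall>m. \<forall>i<length (net m).
        cmod (f \<omega> (net m ! i) - e k (net m ! i)) \<le> inverse (real (Suc n))"
      have cl: "closed {x. cmod (f \<omega> x - e k x) \<le> inverse (real (Suc n))}"
        by (intro closed_Collect_le continuous_on_norm continuous_on_diff cont fA eA continuous_on_const)
      show "P n k \<omega>" unfolding P_def
      proof
        fix x
        have "x \<in> {x. cmod (f \<omega> x - e k x) \<le> inverse (real (Suc n))}"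
          unfolding closed_approachable[OF cl, symmetric]
        proof (intro allI impI)
          fix r :: real assume "0 < r"
          then obtain m where m: "inverse (real (Suc m)) < r" using reals_Archimedean by blast
          obtain i where i: "i < length (net m)" "dist x (net m ! i) < inverse (real (Suc m))"
            using net by blast
          show "\<exists>y\<in>{x. cmod (f \<omega> x - e k x) \<le> inverse (real (Suc n))}. dist y x < r"
            using H i m by (intro bexI[of _ "net m ! i"]) (auto simp: dist_commute)
        qed
        thus "cmod (f \<omega> x - e k x) \<le> inverse (real (Suc n))" by simp
      qed
    qed
    have predP[measurable]: "Measurable.pred \<Omega> (P n k)" for n k
    proof -
      have "P n k = (\<lambda>\<omega>. \<forall>m. \<forall>i<length (net m).
        cmod (f \<omega> (net m ! i) - e k (net m ! i)) \<le> inverse (real (Suc n)))"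
        by (rule ext) (rule Peq)
      moreover have "Measurable.pred \<Omega> (\<lambda>\<omega>. \<forall>m. \<forall>i<length (net m).
        cmod (f \<omega> (net m ! i) - e k (net m ! i)) \<le> inverse (real (Suc n)))"
        by measurable
      ultimately show ?thesis by simp
    qed
    define kn where "kn n \<omega> = (LEAST k. P n k \<omega>)" for n \<omega>
    have knm: "kn n \<in> \<Omega> \<rightarrow>\<^sub>M count_space UNIV" for n
      unfolding kn_def by (rule measurable_Least) (rule predP)
    have Pk: "P n (kn n \<omega>) \<omega>" for n \<omega>
    proof -
      obtain k where "\<forall>x. cmod (f \<omega> x - e k x) < inverse (real (Suc n))"
        using Ddense[OF fA, of "inverse (real (Suc n))"] by auto
      hence "P n k \<omega>" unfolding P_def by (simp add: less_imp_le)
      thus ?thesis unfolding kn_def by (rule LeastI)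
    qed
    have bnd: "cmod (\<phi> (f \<omega>) - \<phi> (e k)) \<le> inverse (real (Suc n))" if "P n k \<omega>" for n k \<omega>
    proof -
      have m1: "(\<lambda>x. (-1) * e k x) \<in> A" by (rule ua_props(3)[OF ua eA])
      have fe: "(\<lambda>x. f \<omega> x + (-1) * e k x) \<in> A" by (rule ua_props(2)[OF ua fA m1])
      have "\<phi> (\<lambda>x. f \<omega> x + (-1) * e k x) = \<phi> (f \<omega>) + \<phi> (\<lambda>x. (-1) * e k x)"
        by (rule mlf_props(1)[OF phi fA m1])
      also have "\<phi> (\<lambda>x. (-1) * e k x) = (-1) * \<phi> (e k)" by (rule mlf_props(2)[OF phi eA])
      finally have eq: "\<phi> (\<lambda>x. f \<omega> x + (-1) * e k x) = \<phi> (f \<omega>) - \<phi> (e k)" by simp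
      have "cmod (\<phi> (\<lambda>x. f \<omega> x + (-1) * e k x)) \<le> inverse (real (Suc n))"
        by (rule mlf_bound[OF ua phi fe]) (use that in \<open>simp add: P_def\<close>)
      thus ?thesis using eq by simp
    qed
    have psim: "(\<lambda>\<omega>. \<phi> (e (kn n \<omega>))) \<in> borel_measurable \<Omega>" for n
      by (rule measurable_compose_countable[where f="\<lambda>k \<omega>. \<phi> (e k)", OF _ knm]) simp
    show "(\<lambda>\<omega>. \<phi> (f \<omega>)) \<in> borel_measurable \<Omega>"
    proof (rule borel_measurable_LIMSEQ_metric[OF psim])
      fix \<omega> assume "\<omega> \<in> space \<Omega>"
      show "(\<lambda>n. \<phi> (e (kn n \<omega>))) \<longlonglongrightarrow> \<phi> (f \<omega>)"
      proof (rule LIMSEQ_I)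
        fix r :: real assume "0 < r"
        then obtain N where N: "inverse (real (Suc N)) < r" using reals_Archimedean by blast
        have "norm (\<phi> (e (kn n \<omega>)) - \<phi> (f \<omega>)) < r" if "n \<ge> N" for n
        proof -
          have "norm (\<phi> (e (kn n \<omega>)) - \<phi> (f \<omega>)) \<le> inverse (real (Suc n))"
            using bnd[OF Pk[of n \<omega>]] by (simp add: norm_minus_commute)
          also have "\<dots> \<le> inverse (real (Suc N))" using that by (simp add: le_imp_inverse_le)
          finally show ?thesis using N by simp
        qed
        thus "\<exists>no. \<forall>n\<ge>no. norm (\<phi> (e (kn n \<omega>)) - \<phi> (f \<omega>)) < r" by blast
      qed
    qed
  qed
qed

end
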